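(* Let $\psi\in\mathcal W^-$, let $Y$ be a compact topological space, and let $f_k,f$ be continuous functions on $Y$ with $f_k\to f$ uniformly. Let $\mu_k,\mu$ be Borel measures on $Y$ of finite mass with $\mu_k\to\mu$ weakly. Then $\int_Y\psi(cf_k)\,d\mu_k\to\int_Y\psi(cf)\,d\mu$ for every $c\in[0,\infty)$, and $\|f_k\|_{\psi,\mu_k}\to\|f\|_{\psi,\mu}$.
   Context: $\mathcal W^-$: functions $\psi:[-\infty,\infty]\to[0,\infty]$, even, continuous on $\mathbb R$, $\psi(0)=0$, $\psi(\pm\infty)=\infty$, smooth, concave, strictly increasing on $(0,\infty)$. For a finite measure $\nu$ and measurable $g$, $\|g\|_{\psi,\nu}=\inf\{N>0:\int_Y\psi(g/N)\,d\nu\le1\}$. *)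

theory Defs
  imports "HOL-Analysis.Analysis"
begin

definition smooth_on :: "real set \<Rightarrow> (real \<Rightarrow> real) \<Rightarrow> bool" where
  "smooth_on S g \<longleftrightarrow> (\<forall>n. \<forall>x\<in>S. ((deriv ^^ n) g) differentiable (at x))"

text \<open>The class W^-; psi is recorded by its restriction to the reals, with
  psi(+-infinity) = infinity expressed as psi x tending to infinity as x tends to infinity.\<close>
definition W_minus :: "(real \<Rightarrow> real) \<Rightarrow> bool" where
  "W_minus \<psi> \<longleftrightarrow>
     (\<forall>x. 0 \<le> \<psi> x) \<and> (\<forall>x. \<psi> (- x) = \<psi> x) \<and> continuous_on UNIV \<psi> \<and> \<psi> 0 = 0 \<and>
     filterlim \<psi> at_top at_top \<and>
     smooth_on {0<..} \<psi> \<and> concave_on {0<..} \<psi> \<and> strict_mono_on {0<..} \<psi>"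

definition psi_norm :: "(real \<Rightarrow> real) \<Rightarrow> 'a measure \<Rightarrow> ('a \<Rightarrow> real) \<Rightarrow> real" where
  "psi_norm \<psi> \<nu> g = Inf {N::real. 0 < N \<and> (\<integral>\<^sup>+ y. ennreal (\<psi> (g y / N)) \<partial>\<nu>) \<le> 1}"

definition weak_conv_meas :: "(nat \<Rightarrow> 'a::topological_space measure) \<Rightarrow> 'a measure \<Rightarrow> bool" where
  "weak_conv_meas \<mu>s \<mu> \<longleftrightarrow>
     (\<forall>g::'a \<Rightarrow> real. continuous_on UNIV g \<longrightarrow>
        (\<lambda>k. \<integral>y. g y \<partial>(\<mu>s k)) \<longlonglongrightarrow> (\<integral>y. g y \<partial>\<mu>))"

end

theory Submission
  imports Defs
begin

lemma cont_bounded: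
  fixes h :: "'a::topological_space \<Rightarrow> real"
  assumes "compact (UNIV::'a set)" "continuous_on UNIV h"
  shows "\<exists>B. \<forall>y. \<bar>h y\<bar> \<le> B"
proof -
  have "compact (h ` UNIV)" by (rule compact_continuous_image[OF assms(2,1)])
  then have "bounded (h ` UNIV)" by (rule compact_imp_bounded)
  then show ?thesis unfolding bounded_iff by auto
qed

lemma cont_meas:
  fixes h :: "'a::topological_space \<Rightarrow> real"
  assumes "continuous_on UNIV h" "sets M = sets borel"
  shows "h \<in> borel_measurable M"
  by (subst measurable_cong_sets[OF assms(2) refl]) (rule borel_measurable_continuous_onI[OF assms(1)])

lemma cont_integrable:
  fixes h :: "'a::topological_space \<Rightarrow> real"
  assumes "compact (UNIV::'a set)" "continuous_on UNIV h" "sets M = sets borel" "finite_measure M"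
  shows "integrable M h"
proof -
  obtain B where B: "\<forall>y. \<bar>h y\<bar> \<le> B" using cont_bounded[OF assms(1,2)] by blast
  show ?thesis
    by (rule finite_measure.integrable_const_bound[OF assms(4), of h B]) (use B cont_meas[OF assms(2,3)] in auto)
qed

lemma int_bound:
  fixes h :: "'a \<Rightarrow> real"
  assumes "finite_measure M" "integrable M h" "\<And>y. \<bar>h y\<bar> \<le> e"
  shows "\<bar>\<integral>y. h y \<partial>M\<bar> \<le> e * measure M (space M)"
proof -
  have "\<bar>\<integral>y. h y \<partial>M\<bar> \<le> (\<integral>y. \<bar>h y\<bar> \<partial>M)"
    using integral_norm_bound[of M h] by simp
  also have "\<dots> \<le> (\<integral>y. e \<partial>M)"
    by (rule integral_mono) (use assms finite_measure.integrable_const[OF assms(1)] in auto)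
  also have "\<dots> = e * measure M (space M)" by simp
  finally show ?thesis .
qed

lemma conv_int:
  fixes gs :: "nat \<Rightarrow> 'a::topological_space \<Rightarrow> real" and g :: "'a \<Rightarrow> real"
  assumes cpt: "compact (UNIV :: 'a set)"
    and gsc: "\<And>k. continuous_on UNIV (gs k)" and gc: "continuous_on UNIV g"
    and unif: "\<And>e. e > 0 \<Longrightarrow> eventually (\<lambda>k. \<forall>y. \<bar>gs k y - g y\<bar> < e) sequentially"
    and sk: "\<And>k. sets (\<mu>s k) = sets borel" and fk: "\<And>k. finite_measure (\<mu>s k)"
    and s: "sets \<mu> = sets borel" and fm: "finite_measure \<mu>"
    and w: "weak_conv_meas \<mu>s \<mu>"
  shows "(\<lambda>k. \<integral>y. gs k y \<partial>(\<mu>s k)) \<longlonglongrightarrow> (\<integral>y. g y \<partial>\<mu>)"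
proof -
  have W: "\<And>g::'a \<Rightarrow> real. continuous_on UNIV g \<Longrightarrow> (\<lambda>k. \<integral>y. g y \<partial>(\<mu>s k)) \<longlonglongrightarrow> (\<integral>y. g y \<partial>\<mu>)"
    using w unfolding weak_conv_meas_def by blast
  have A: "(\<lambda>k. \<integral>y. g y \<partial>(\<mu>s k)) \<longlonglongrightarrow> (\<integral>y. g y \<partial>\<mu>)" by (rule W[OF gc])
  have "(\<lambda>k. \<integral>y. (1::real) \<partial>(\<mu>s k)) \<longlonglongrightarrow> (\<integral>y. 1 \<partial>\<mu>)"
    using W[of "\<lambda>y. 1"] by simp
  then have m: "(\<lambda>k. measure (\<mu>s k) (space (\<mu>s k))) \<longlonglongrightarrow> measure \<mu> (space \<mu>)" by simp
  define M where "M = measure \<mu> (space \<mu>) + 1"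
  have Mp: "M > 0" unfolding M_def by (simp add: measure_nonneg add_nonneg_pos)
  have evM: "eventually (\<lambda>k. measure (\<mu>s k) (space (\<mu>s k)) < M) sequentially"
    using order_tendstoD(2)[OF m, of M] unfolding M_def by simp
  have B: "(\<lambda>k. (\<integral>y. gs k y \<partial>(\<mu>s k)) - (\<integral>y. g y \<partial>(\<mu>s k))) \<longlonglongrightarrow> 0"
  proof (rule tendstoI)
    fix e :: real assume e: "e > 0"
    have "eventually (\<lambda>k. \<forall>y. \<bar>gs k y - g y\<bar> < e / (2*M)) sequentially"
      by (rule unif) (use e Mp in simp)
    then show "eventually (\<lambda>k. dist ((\<integral>y. gs k y \<partial>(\<mu>s k)) - (\<integral>y. g y \<partial>(\<mu>s k))) 0 < e) sequentially"
      using evM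
    proof eventually_elim
      case (elim k)
      have ig: "integrable (\<mu>s k) (gs k)" "integrable (\<mu>s k) g"
        using cont_integrable[OF cpt gsc sk fk] cont_integrable[OF cpt gc sk fk] by auto
      have "\<bar>\<integral>y. gs k y - g y \<partial>(\<mu>s k)\<bar> \<le> e / (2*M) * measure (\<mu>s k) (space (\<mu>s k))"
        by (rule int_bound[OF fk]) (use ig elim in \<open>auto intro: less_imp_le\<close>)
      also have "\<dots> \<le> e / (2*M) * M"
        using elim e Mp by (intro mult_left_mono) auto
      also have "\<dots> < e" using e Mp by simp
      finally show ?case using ig by (simp add: dist_real_def)
    qed
  qed
  from tendsto_add[OF B A] show ?thesis by simp
qed


lemma psi_facts:
  assumes "W_minus \<psi>"
  shows "\<And>x. 0 \<le> \<psi> x" "\<And>x. \<psi> (- x) = \<psi> x" "continuous_on UNIV \<psi>" "\<psi> 0 = 0"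
    "strict_mono_on {0<..} \<psi>"
  using assms unfolding W_minus_def by auto

lemma psi_abs:
  assumes "W_minus \<psi>" shows "\<psi> x = \<psi> \<bar>x\<bar>"
  using psi_facts(2)[OF assms, of x] by (cases "x \<ge> 0") auto

lemma psi_strict:
  assumes "W_minus \<psi>" "0 \<le> a" "a < b" shows "\<psi> a < \<psi> b"
proof (cases "a = 0")
  case True
  have "\<psi> (b/2) < \<psi> b" using assms by (intro strict_mono_onD[OF psi_facts(5)[OF assms(1)]]) auto
  moreover have "0 \<le> \<psi> (b/2)" using psi_facts(1)[OF assms(1)] .
  ultimately show ?thesis using True psi_facts(4)[OF assms(1)] by simp
next
  case False
  then show ?thesis using assms by (intro strict_mono_onD[OF psi_facts(5)[OF assms(1)]]) auto
qed

lemma psi_mono: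
  assumes "W_minus \<psi>" "0 \<le> a" "a \<le> b" shows "\<psi> a \<le> \<psi> b"
  using psi_strict[OF assms(1,2), of b] assms(3) by (cases "a = b") auto

lemma psi_mono_abs:
  assumes "W_minus \<psi>" "\<bar>a\<bar> \<le> \<bar>b\<bar>" shows "\<psi> a \<le> \<psi> b"
proof -
  have "\<psi> \<bar>a\<bar> \<le> \<psi> \<bar>b\<bar>" by (rule psi_mono[OF assms(1) _ assms(2)]) simp
  moreover have "\<psi> a = \<psi> \<bar>a\<bar>" "\<psi> b = \<psi> \<bar>b\<bar>" by (rule psi_abs[OF assms(1)])+
  ultimately show ?thesis by simp
qed

lemma psi_strict_abs:
  assumes "W_minus \<psi>" "\<bar>a\<bar> < \<bar>b\<bar>" shows "\<psi> a < \<psi> b"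
proof -
  have "\<psi> \<bar>a\<bar> < \<psi> \<bar>b\<bar>" by (rule psi_strict[OF assms(1) _ assms(2)]) simp
  moreover have "\<psi> a = \<psi> \<bar>a\<bar>" "\<psi> b = \<psi> \<bar>b\<bar>" by (rule psi_abs[OF assms(1)])+
  ultimately show ?thesis by simp
qed

lemma psi_comp_cont:
  assumes "W_minus \<psi>" "continuous_on UNIV h"
  shows "continuous_on UNIV (\<lambda>y. \<psi> (c * h y))" "continuous_on UNIV (\<lambda>y. \<psi> (h y / N))"
proof -
  show c: "continuous_on UNIV (\<lambda>y. \<psi> (c * h y))" for c
    by (rule continuous_on_compose2[OF psi_facts(3)[OF assms(1)] continuous_on_mult[OF continuous_on_const assms(2)]]) simp
  have "(\<lambda>y. \<psi> (h y / N)) = (\<lambda>y. \<psi> ((1/N) * h y))" by simp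
  then show "continuous_on UNIV (\<lambda>y. \<psi> (h y / N))" using c[of "1/N"] by simp
qed


locale setting =
  fixes \<psi> :: "real \<Rightarrow> real" and M :: "'a::topological_space measure" and h :: "'a \<Rightarrow> real"
  assumes W: "W_minus \<psi>" and cpt: "compact (UNIV :: 'a set)" and hc: "continuous_on UNIV h"
    and sM: "sets M = sets borel" and fM: "finite_measure M"
begin

definition I :: "real \<Rightarrow> real" where "I N = (\<integral>y. \<psi> (h y / N) \<partial>M)"

lemma integ: "integrable M (\<lambda>y. \<psi> (h y / N))"
  by (rule cont_integrable[OF cpt psi_comp_cont(2)[OF W hc] sM fM])

lemma nn_eq: "(\<integral>\<^sup>+y. ennreal (\<psi> (h y / N)) \<partial>M) = ennreal (I N)"
  unfolding I_def by (rule nn_integral_eq_integral) (use integ psi_facts(1)[OF W] in auto)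

lemma norm_eq: "psi_norm \<psi> M h = Inf {N. 0 < N \<and> I N \<le> 1}"
  unfolding psi_norm_def nn_eq by simp

lemma I_mono: assumes "0 < N" "N \<le> N'" shows "I N' \<le> I N"
  unfolding I_def
proof (rule integral_mono[OF integ integ])
  fix y
  have "\<bar>h y / N'\<bar> \<le> \<bar>h y / N\<bar>" using assms by (auto simp: abs_divide intro!: divide_left_mono)
  then show "\<psi> (h y / N') \<le> \<psi> (h y / N)" by (rule psi_mono_abs[OF W])
qed

lemma I_strict: assumes "0 < N1" "N1 < N" "I N1 \<le> 1" shows "I N < 1"
proof (rule ccontr)
  assume "\<not> I N < 1"
  then have "I N1 - I N = 0" using I_mono[of N1 N] assms by auto
  then have "(\<integral>y. \<psi> (h y / N1) - \<psi> (h y / N) \<partial>M) = 0"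
    unfolding I_def using integ by (subst Bochner_Integration.integral_diff) auto
  moreover have "AE y in M. 0 \<le> \<psi> (h y / N1) - \<psi> (h y / N)"
  proof
    fix y
    have "\<bar>h y / N\<bar> \<le> \<bar>h y / N1\<bar>" using assms by (auto simp: abs_divide intro!: divide_left_mono)
    then show "0 \<le> \<psi> (h y / N1) - \<psi> (h y / N)" using psi_mono_abs[OF W] by auto
  qed
  ultimately have "AE y in M. \<psi> (h y / N1) - \<psi> (h y / N) = 0"
    using integral_nonneg_eq_0_iff_AE[OF Bochner_Integration.integrable_diff[OF integ integ]] by blast
  then have "AE y in M. \<psi> (h y / N) = 0"
  proof (rule AE_mp, intro AE_I2 impI)
    fix y assume eq: "\<psi> (h y / N1) - \<psi> (h y / N) = 0"
    show "\<psi> (h y / N) = 0"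
    proof (cases "h y = 0")
      case True then show ?thesis using psi_facts(4)[OF W] by simp
    next
      case False
      have "\<bar>h y / N\<bar> < \<bar>h y / N1\<bar>" using assms False
        by (auto simp: abs_divide intro!: divide_strict_left_mono)
      then have "\<psi> (h y / N) < \<psi> (h y / N1)" by (rule psi_strict_abs[OF W])
      then show ?thesis using eq by simp
    qed
  qed
  then have "I N = 0" unfolding I_def by (rule integral_eq_zero_AE)
  then show False using \<open>\<not> I N < 1\<close> by simp
qed

lemma I_small: "\<exists>N>0. I N \<le> 1"
proof -
  obtain B where B: "\<forall>y. \<bar>h y\<bar> \<le> B" using cont_bounded[OF cpt hc] by blast
  then have B0: "0 \<le> B" by (meson abs_ge_zero order_trans)
  define m where "m = measure M (space M)"
  have m0: "0 \<le> m" unfolding m_def by (rule measure_nonneg)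
  have "isCont \<psi> 0" using psi_facts(3)[OF W] by (simp add: continuous_on_eq_continuous_at)
  then have "\<psi> \<midarrow>0\<rightarrow> 0" using psi_facts(4)[OF W] by (simp add: isCont_def)
  then obtain d where d: "d > 0" "\<And>x. x \<noteq> 0 \<Longrightarrow> \<bar>x\<bar> < d \<Longrightarrow> \<bar>\<psi> x\<bar> < 1 / (m + 1)"
    unfolding LIM_eq using m0 by (metis add_nonneg_pos divide_pos_pos real_norm_def zero_less_one diff_zero)
  define N where "N = (B + 1) / d"
  have N0: "N > 0" unfolding N_def using B0 d by simp
  have bnd: "\<bar>\<psi> (h y / N)\<bar> \<le> 1 / (m + 1)" for y
  proof (cases "h y / N = 0")
    case True
    have "\<psi> (h y / N) = 0" by (subst True) (rule psi_facts(4)[OF W])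
    then show ?thesis using m0 by simp
  next
    case False
    have "\<bar>h y / N\<bar> = \<bar>h y\<bar> * d / (B + 1)" unfolding N_def using d B0 by (simp add: abs_divide abs_mult)
    also have "\<dots> \<le> B * d / (B + 1)" using B d B0 by (intro divide_right_mono mult_right_mono) auto
    also have "\<dots> < d" using d B0 by (simp add: field_simps)
    finally show ?thesis using d(2)[OF False] by (simp add: less_imp_le)
  qed
  have "\<bar>I N\<bar> \<le> 1 / (m + 1) * m" unfolding I_def m_def
    by (rule int_bound[OF fM integ]) (use bnd m_def in auto)
  also have "\<dots> \<le> 1" using m0 by (simp add: field_simps)
  finally show ?thesis using N0 by auto
qed

definition S where "S = {N. 0 < N \<and> I N \<le> 1}"

lemma S_ne: "S \<noteq> {}" using I_small unfolding S_def by auto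
lemma S_bdd: "bdd_below S" unfolding S_def bdd_below_def by (auto intro: less_imp_le)

lemma norm_S: "psi_norm \<psi> M h = Inf S" unfolding norm_eq S_def ..

lemma above: assumes "psi_norm \<psi> M h < N" shows "I N < 1"
proof -
  obtain N1 where "N1 \<in> S" "N1 < N" using assms cInf_less_iff[OF S_ne S_bdd] unfolding norm_S by blast
  then show ?thesis unfolding S_def by (auto intro: I_strict)
qed

lemma below: assumes "0 < N" "N < psi_norm \<psi> M h" shows "1 < I N"
proof (rule ccontr)
  assume "\<not> 1 < I N"
  then have "N \<in> S" using assms unfolding S_def by auto
  then have "psi_norm \<psi> M h \<le> N" unfolding norm_S by (rule cInf_lower[OF _ S_bdd])
  then show False using assms by simp
qed

lemma norm_le: assumes "0 < N" "I N \<le> 1" shows "psi_norm \<psi> M h \<le> N"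
  unfolding norm_S by (rule cInf_lower[OF _ S_bdd]) (use assms S_def in auto)

lemma norm_ge: assumes "0 \<le> N" "0 < N \<Longrightarrow> 1 < I N" shows "N \<le> psi_norm \<psi> M h"
  unfolding norm_S
proof (rule cInf_greatest[OF S_ne])
  fix x assume x: "x \<in> S"
  show "N \<le> x"
  proof (rule ccontr)
    assume "\<not> N \<le> x"
    then have "0 < N" "x < N" "0 < x" using x unfolding S_def by auto
    then have "I N \<le> I x" by (intro I_mono) auto
    then show False using assms(2)[OF \<open>0 < N\<close>] x unfolding S_def by auto
  qed
qed

end

theorem lemma2p8:
  fixes \<psi> :: "real \<Rightarrow> real"
    and fs :: "nat \<Rightarrow> 'a::topological_space \<Rightarrow> real" and f :: "'a \<Rightarrow> real"
    and \<mu>s :: "nat \<Rightarrow> 'a measure" and \<mu> :: "'a measure"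
  assumes "W_minus \<psi>"
    and "compact (UNIV :: 'a set)"
    and "\<And>k. continuous_on UNIV (fs k)" and "continuous_on UNIV f"
    and "uniform_limit UNIV fs f sequentially"
    and "\<And>k. sets (\<mu>s k) = sets borel" and "\<And>k. finite_measure (\<mu>s k)"
    and "sets \<mu> = sets borel" and "finite_measure \<mu>"
    and "weak_conv_meas \<mu>s \<mu>"
  shows "(\<forall>c::real. 0 \<le> c \<longrightarrow>
            (\<lambda>k. \<integral>y. \<psi> (c * fs k y) \<partial>(\<mu>s k)) \<longlonglongrightarrow> (\<integral>y. \<psi> (c * f y) \<partial>\<mu>))
       \<and> (\<lambda>k. psi_norm \<psi> (\<mu>s k) (fs k)) \<longlonglongrightarrow> psi_norm \<psi> \<mu> f"
proof -
  note W = assms(1) and cpt = assms(2) and fsc = assms(3) and fc = assms(4)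
    and sk = assms(6) and fk = assms(7) and s = assms(8) and fm = assms(9) and w = assms(10)
  have unif: "\<And>e. e > 0 \<Longrightarrow> eventually (\<lambda>k. \<forall>y. \<bar>fs k y - f y\<bar> < e) sequentially"
    using assms(5) unfolding uniform_limit_iff dist_real_def by auto
  have P1: "(\<lambda>k. \<integral>y. \<psi> (c * fs k y) \<partial>(\<mu>s k)) \<longlonglongrightarrow> (\<integral>y. \<psi> (c * f y) \<partial>\<mu>)"
    if c: "0 \<le> c" for c
  proof (rule conv_int[OF cpt psi_comp_cont(1)[OF W fsc] psi_comp_cont(1)[OF W fc] _ sk fk s fm w])
    fix e :: real assume e: "e > 0"
    obtain B where B: "\<forall>y. \<bar>f y\<bar> \<le> B" using cont_bounded[OF cpt fc] by blast
    define K where "K = cball (0::real) (c * (B + 1))"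
    have "uniformly_continuous_on K \<psi>"
      unfolding K_def by (rule compact_uniformly_continuous) (use psi_facts(3)[OF W] continuous_on_subset in auto)
    then have "\<exists>d>0. \<forall>x\<in>K. \<forall>x'\<in>K. dist x' x < d \<longrightarrow> dist (\<psi> x') (\<psi> x) < e"
      using e unfolding uniformly_continuous_on_def by blast
    then obtain d where d: "d > 0" "\<forall>x\<in>K. \<forall>x'\<in>K. dist x' x < d \<longrightarrow> dist (\<psi> x') (\<psi> x) < e"
      by blast
    have "eventually (\<lambda>k. \<forall>y. \<bar>fs k y - f y\<bar> < min 1 (d / (c + 1))) sequentially"
      by (rule unif) (use d c in simp)
    then show "eventually (\<lambda>k. \<forall>y. \<bar>\<psi> (c * fs k y) - \<psi> (c * f y)\<bar> < e) sequentially"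
    proof eventually_elim
      case (elim k)
      show ?case
      proof
        fix y
        have a1: "\<bar>fs k y - f y\<bar> < 1" "\<bar>fs k y - f y\<bar> < d / (c + 1)" using elim by auto
        have "\<bar>fs k y\<bar> \<le> B + 1" using a1(1) B[rule_format, of y] by (auto simp: abs_le_iff abs_less_iff)
        then have "\<bar>c * fs k y\<bar> \<le> c * (B + 1)" using c by (simp add: abs_mult mult_left_mono)
        then have K1: "c * fs k y \<in> K" unfolding K_def by (simp add: dist_real_def)
        have "\<bar>f y\<bar> \<le> B + 1" using B[rule_format, of y] by simp
        then have "c * \<bar>f y\<bar> \<le> c * (B + 1)" using c by (rule mult_left_mono)
        then have "\<bar>c * f y\<bar> \<le> c * (B + 1)" using c by (simp add: abs_mult)
        then have K2: "c * f y \<in> K" unfolding K_def by (simp add: dist_real_def)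
        have "\<bar>c * fs k y - c * f y\<bar> = c * \<bar>fs k y - f y\<bar>" using c by (simp add: abs_mult right_diff_distrib[symmetric])
        also have "\<dots> \<le> c * (d / (c + 1))" using c a1(2) by (intro mult_left_mono) auto
        also have "\<dots> < d" using c d by (simp add: field_simps)
        finally have "dist (c * fs k y) (c * f y) < d" by (simp add: dist_real_def)
        with d(2) K1 K2 have "dist (\<psi> (c * fs k y)) (\<psi> (c * f y)) < e" by blast
        then show "\<bar>\<psi> (c * fs k y) - \<psi> (c * f y)\<bar> < e" by (simp add: dist_real_def)
      qed
    qed
  qed
  have Sk: "setting \<psi> (\<mu>s k) (fs k)" for k
    unfolding setting_def using W cpt fsc sk fk by blast
  have S0: "setting \<psi> \<mu> f"
    unfolding setting_def using W cpt fc s fm by blast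
  have IC: "(\<lambda>k. setting.I \<psi> (\<mu>s k) (fs k) N) \<longlonglongrightarrow> setting.I \<psi> \<mu> f N" if N: "0 < N" for N
  proof -
    have "(\<lambda>k. \<integral>y. \<psi> ((1/N) * fs k y) \<partial>(\<mu>s k)) \<longlonglongrightarrow> (\<integral>y. \<psi> ((1/N) * f y) \<partial>\<mu>)"
      by (rule P1) (use N in simp)
    then show ?thesis unfolding setting.I_def[OF Sk] setting.I_def[OF S0] by simp
  qed
  define n where "n = psi_norm \<psi> \<mu> f"
  have n0: "0 \<le> n" unfolding n_def by (rule setting.norm_ge[OF S0]) auto
  have P2: "(\<lambda>k. psi_norm \<psi> (\<mu>s k) (fs k)) \<longlonglongrightarrow> n"
  proof (rule tendstoI)
    fix e :: real assume e: "e > 0"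
    have up: "setting.I \<psi> \<mu> f (n + e/2) < 1" unfolding n_def by (rule setting.above[OF S0]) (use e n_def in simp)
    have ev1: "eventually (\<lambda>k. setting.I \<psi> (\<mu>s k) (fs k) (n + e/2) < 1) sequentially"
      by (rule order_tendstoD(2)[OF IC up]) (use e n0 in simp)
    have ev2: "eventually (\<lambda>k. 0 < n - e/2 \<longrightarrow> 1 < setting.I \<psi> (\<mu>s k) (fs k) (n - e/2)) sequentially"
    proof (cases "0 < n - e/2")
      case True
      have "1 < setting.I \<psi> \<mu> f (n - e/2)" by (rule setting.below[OF S0]) (use True e n_def in auto)
      from order_tendstoD(1)[OF IC[OF True] this] show ?thesis by eventually_elim simp
    next
      case False then show ?thesis by simp
    qed
    from ev1 ev2 show "eventually (\<lambda>k. dist (psi_norm \<psi> (\<mu>s k) (fs k)) n < e) sequentially"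
    proof eventually_elim
      case (elim k)
      have hi: "psi_norm \<psi> (\<mu>s k) (fs k) \<le> n + e/2"
        by (rule setting.norm_le[OF Sk]) (use elim e n0 in auto)
      have lo: "max 0 (n - e/2) \<le> psi_norm \<psi> (\<mu>s k) (fs k)"
      proof (rule setting.norm_ge[OF Sk])
        assume "0 < max 0 (n - e/2)"
        then have "0 < n - e/2" "max 0 (n - e/2) = n - e/2" by auto
        then show "1 < setting.I \<psi> (\<mu>s k) (fs k) (max 0 (n - e/2))" using elim by simp
      qed simp
      have l2: "n - e/2 \<le> psi_norm \<psi> (\<mu>s k) (fs k)" using lo by simp
      show ?case unfolding dist_real_def abs_less_iff using hi l2 e by (intro conjI) linarith+
    qed
  qed
  show ?thesis using P1 P2 unfolding n_def by blast
qed

end
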